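(* Let $n,k,t$ be positive integers with $k<n$ and $t\ge 4$, let $q$ be a prime power and $\mathcal{D}$ the Desarguesian $(t-1)$-spread of $\mathrm{PG}(nt-1,q)$. Let $\nu$ be a $\mathcal{D}_{n-k-1}$-subspace, $\Pi$ an $(nt-kt+1)$-dimensional subspace containing $\nu$ such that the points of $\mathcal{B}(\Pi)$ span an $(n-k+1)$-dimensional subspace of $\mathrm{PG}(n-1,q^t)$, $\Omega$ an $(nt-kt-2)$-dimensional subspace of $\Pi$ meeting $\nu$ in an $(nt-kt-4)$-dimensional subspace, $\Gamma$ a plane of $\Pi$ skew from $\Omega$, $\bar{B}$ a minimal blocking set of $\Gamma$ disjoint from $\nu$, and $K$ the cone with vertex $\Omega$ and base $\bar{B}$. Then the blocking set $\mathcal{B}(K)$ (with respect to $(k-1)$-dimensional subspaces) of $\mathrm{PG}(n-1,q^t)$ spans a subspace of dimension $n-k+1$.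
   Context: Field reduction: each point of $\mathrm{PG}(n-1,q^t)$ corresponds to a $(t-1)$-dimensional subspace of $\mathrm{PG}(nt-1,q)$; these form the Desarguesian $(t-1)$-spread $\mathcal{D}$. A $\mathcal{D}_{r-1}$-subspace is an $(rt-1)$-dimensional subspace spanned by elements of $\mathcal{D}$. For $U\subseteq\mathrm{PG}(nt-1,q)$, $\mathcal{B}(U)$ is the set of elements of $\mathcal{D}$ meeting $U$, identified with points of $\mathrm{PG}(n-1,q^t)$. The cone with vertex $\Omega$ and base $\bar{B}$ is $\bigcup_{P\in\bar B}\langle P,\Omega\rangle$. A minimal blocking set of a plane is a point set meeting every line, no proper subset of which does so. *)

theory Defs
  imports "HOL-Computational_Algebra.Primes"
begin

text \<open>Vectors of V(n, q^t) are functions 'n => 'f, where 'f is the finite field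
GF(q^t) and n = CARD('n). GF(q) is a subfield K of 'f. Projective subspaces
of PG(nt-1,q) are K-linear subspaces (projective dim = K-dim - 1); points
of PG(n-1,q^t) are 1-dimensional F-subspaces.\<close>

definition vzero :: "'n \<Rightarrow> 'f::field" where
  "vzero = (\<lambda>_. 0)"

definition vadd :: "('n \<Rightarrow> 'f::field) \<Rightarrow> ('n \<Rightarrow> 'f) \<Rightarrow> ('n \<Rightarrow> 'f)" where
  "vadd u w = (\<lambda>i. u i + w i)"

definition smul :: "'f::field \<Rightarrow> ('n \<Rightarrow> 'f) \<Rightarrow> ('n \<Rightarrow> 'f)" where
  "smul c u = (\<lambda>i. c * u i)"

definition is_subfield :: "'f::field set \<Rightarrow> bool" where
  "is_subfield K \<longleftrightarrow> 0 \<in> K \<and> 1 \<in> K \<and> (\<forall>a\<in>K. \<forall>b\<in>K. a + b \<in> K \<and> a * b \<in> K)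
     \<and> (\<forall>a\<in>K. - a \<in> K \<and> inverse a \<in> K)"

text \<open>Linear subspace over the scalar set L (L = K for GF(q), L = UNIV for GF(q^t)).\<close>
definition lin_subspace :: "'f::field set \<Rightarrow> ('n \<Rightarrow> 'f) set \<Rightarrow> bool" where
  "lin_subspace L U \<longleftrightarrow> vzero \<in> U \<and> (\<forall>u\<in>U. \<forall>w\<in>U. vadd u w \<in> U)
     \<and> (\<forall>c\<in>L. \<forall>u\<in>U. smul c u \<in> U)"

definition lin_span :: "'f::field set \<Rightarrow> ('n \<Rightarrow> 'f) set \<Rightarrow> ('n \<Rightarrow> 'f) set" where
  "lin_span L S = \<Inter>{U. lin_subspace L U \<and> S \<subseteq> U}"

definition lin_dim :: "'f::field set \<Rightarrow> ('n \<Rightarrow> 'f) set \<Rightarrow> nat" where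
  "lin_dim L U = (LEAST m. \<exists>S. finite S \<and> card S = m \<and> lin_span L S = U)"

text \<open>Subspace of PG(nt-1,q) of vector dimension d (projective dimension d-1).\<close>
definition psub :: "'f::field set \<Rightarrow> nat \<Rightarrow> ('n \<Rightarrow> 'f) set \<Rightarrow> bool" where
  "psub K d U \<longleftrightarrow> lin_subspace K U \<and> lin_dim K U = d"

text \<open>Desarguesian spread: the 1-dimensional GF(q^t)-subspaces.\<close>
definition desarg_spread :: "('n \<Rightarrow> 'f::field) set set" where
  "desarg_spread = {lin_span UNIV {v} | v. v \<noteq> vzero}"

text \<open>D_{r-1}-subspace: (rt-1)-dimensional subspace spanned by spread elements.\<close>
definition D_subspace :: "'f::field set \<Rightarrow> nat \<Rightarrow> nat \<Rightarrow> ('n \<Rightarrow> 'f) set \<Rightarrow> bool" where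
  "D_subspace K t r U \<longleftrightarrow> psub K (r * t) U
     \<and> U = lin_span K (\<Union>{d \<in> desarg_spread. d \<subseteq> U})"

definition B_set :: "('n \<Rightarrow> 'f::field) set \<Rightarrow> ('n \<Rightarrow> 'f) set set" where
  "B_set U = {d \<in> desarg_spread. \<exists>v \<in> d \<inter> U. v \<noteq> vzero}"

text \<open>Projective dimension (+1) of the span in PG(n-1,q^t) of a set of points.\<close>
definition span_dim_qt :: "('n \<Rightarrow> 'f::field) set set \<Rightarrow> nat" where
  "span_dim_qt P = lin_dim UNIV (lin_span UNIV (\<Union>P))"

definition blocks_lines :: "'f::field set \<Rightarrow> ('n \<Rightarrow> 'f) set \<Rightarrow> ('n \<Rightarrow> 'f) set set \<Rightarrow> bool" where
  "blocks_lines K Gamma B \<longleftrightarrow> (\<forall>P\<in>B. psub K 1 P \<and> P \<subseteq> Gamma)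
     \<and> (\<forall>L. psub K 2 L \<and> L \<subseteq> Gamma \<longrightarrow> (\<exists>P\<in>B. P \<subseteq> L))"

definition minimal_blocking_set :: "'f::field set \<Rightarrow> ('n \<Rightarrow> 'f) set \<Rightarrow> ('n \<Rightarrow> 'f) set set \<Rightarrow> bool" where
  "minimal_blocking_set K Gamma B \<longleftrightarrow> blocks_lines K Gamma B
     \<and> (\<forall>B'. B' \<subset> B \<longrightarrow> \<not> blocks_lines K Gamma B')"

definition cone :: "'f::field set \<Rightarrow> ('n \<Rightarrow> 'f) set \<Rightarrow> ('n \<Rightarrow> 'f) set set \<Rightarrow> ('n \<Rightarrow> 'f) set" where
  "cone K Omega B = (\<Union>P\<in>B. lin_span K (P \<union> Omega))"

end

theory Submission
  imports Defs "HOL-Library.FuncSet"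
begin

lemma span_sub: "lin_subspace L (lin_span L S)"
  unfolding lin_span_def lin_subspace_def by auto

lemma span_inc: "S \<subseteq> lin_span L S"
  unfolding lin_span_def by auto

lemma span_least: "lin_subspace L U \<Longrightarrow> S \<subseteq> U \<Longrightarrow> lin_span L S \<subseteq> U"
  unfolding lin_span_def by auto

lemma span_of_sub: "lin_subspace L U \<Longrightarrow> lin_span L U = U"
  by (meson span_inc span_least subset_antisym order_refl)

lemma sub_vzero: "lin_subspace L U \<Longrightarrow> vzero \<in> U"
  unfolding lin_subspace_def by auto
lemma sub_vadd: "lin_subspace L U \<Longrightarrow> u \<in> U \<Longrightarrow> w \<in> U \<Longrightarrow> vadd u w \<in> U"
  unfolding lin_subspace_def by auto
lemma sub_smul: "lin_subspace L U \<Longrightarrow> c \<in> L \<Longrightarrow> u \<in> U \<Longrightarrow> smul c u \<in> U"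
  unfolding lin_subspace_def by auto

lemma subfield_UNIV: "is_subfield UNIV"
  by (simp add: is_subfield_def)

lemma sf0: "is_subfield L \<Longrightarrow> 0 \<in> L" and sf1: "is_subfield L \<Longrightarrow> 1 \<in> L"
  and sfadd: "is_subfield L \<Longrightarrow> a \<in> L \<Longrightarrow> b \<in> L \<Longrightarrow> a + b \<in> L"
  and sfmul: "is_subfield L \<Longrightarrow> a \<in> L \<Longrightarrow> b \<in> L \<Longrightarrow> a * b \<in> L"
  and sfneg: "is_subfield L \<Longrightarrow> a \<in> L \<Longrightarrow> - a \<in> L"
  and sfinv: "is_subfield L \<Longrightarrow> a \<in> L \<Longrightarrow> inverse a \<in> L"
  unfolding is_subfield_def by auto

lemma sfdiff: "is_subfield L \<Longrightarrow> a \<in> L \<Longrightarrow> b \<in> L \<Longrightarrow> a - b \<in> L"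
  using sfadd sfneg by (metis diff_conv_add_uminus)

definition comb :: "('n \<Rightarrow> 'f::field) set \<Rightarrow> (('n \<Rightarrow> 'f) \<Rightarrow> 'f) \<Rightarrow> ('n \<Rightarrow> 'f)" where
  "comb S c = (\<lambda>i. \<Sum>s\<in>S. c s * s i)"

lemma comb_cong: "(\<And>s. s \<in> S \<Longrightarrow> c s = d s) \<Longrightarrow> comb S c = comb S d"
  unfolding comb_def by (auto intro!: sum.cong)

lemma comb_restrict: "comb S (restrict c S) = comb S c"
  by (rule comb_cong) simp

lemma comb_add: "vadd (comb S c) (comb S d) = comb S (\<lambda>s. c s + d s)"
  unfolding comb_def vadd_def by (simp add: sum.distrib distrib_right)

lemma comb_smul: "smul a (comb S c) = comb S (\<lambda>s. a * c s)"
  unfolding comb_def smul_def by (simp add: sum_distrib_left mult.assoc)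

lemma comb_empty: "comb {} c = vzero"
  unfolding comb_def vzero_def by simp

lemma comb_insert: "finite T \<Longrightarrow> x \<notin> T \<Longrightarrow> comb (insert x T) c = vadd (smul (c x) x) (comb T c)"
  unfolding comb_def vadd_def smul_def by simp

lemma comb_in: assumes U: "lin_subspace L U"
  shows "finite T \<Longrightarrow> T \<subseteq> U \<Longrightarrow> (\<forall>s\<in>T. c s \<in> L) \<Longrightarrow> comb T c \<in> U"
proof (induction T rule: finite_induct)
  case empty then show ?case by (simp add: comb_empty sub_vzero[OF U])
next
  case (insert x F) then show ?case
    by (simp add: comb_insert sub_vadd[OF U] sub_smul[OF U])
qed

lemma span_eq: assumes L: "is_subfield L" and fin: "finite S"
  shows "lin_span L S = comb S ` (S \<rightarrow>\<^sub>E L)"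
proof
  have sub: "lin_subspace L (comb S ` (S \<rightarrow>\<^sub>E L))"
    unfolding lin_subspace_def
  proof (intro conjI ballI)
    have "vzero = comb S (restrict (\<lambda>s. 0) S)"
      by (simp add: comb_restrict comb_def vzero_def)
    moreover have "restrict (\<lambda>s. 0) S \<in> S \<rightarrow>\<^sub>E L" using sf0[OF L] by auto
    ultimately show "vzero \<in> comb S ` (S \<rightarrow>\<^sub>E L)" by (rule image_eqI)
  next
    fix u w assume "u \<in> comb S ` (S \<rightarrow>\<^sub>E L)" "w \<in> comb S ` (S \<rightarrow>\<^sub>E L)"
    then obtain c d where c: "c \<in> S \<rightarrow>\<^sub>E L" "u = comb S c" and d: "d \<in> S \<rightarrow>\<^sub>E L" "w = comb S d" by auto
    have "vadd u w = comb S (restrict (\<lambda>s. c s + d s) S)" by (simp add: c d comb_add comb_restrict)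
    moreover have "restrict (\<lambda>s. c s + d s) S \<in> S \<rightarrow>\<^sub>E L" using c d sfadd[OF L] by auto
    ultimately show "vadd u w \<in> comb S ` (S \<rightarrow>\<^sub>E L)" by (rule image_eqI)
  next
    fix a u assume a: "a \<in> L" and "u \<in> comb S ` (S \<rightarrow>\<^sub>E L)"
    then obtain c where c: "c \<in> S \<rightarrow>\<^sub>E L" "u = comb S c" by auto
    have "smul a u = comb S (restrict (\<lambda>s. a * c s) S)" by (simp add: c comb_smul comb_restrict)
    moreover have "restrict (\<lambda>s. a * c s) S \<in> S \<rightarrow>\<^sub>E L" using c a sfmul[OF L] by auto
    ultimately show "smul a u \<in> comb S ` (S \<rightarrow>\<^sub>E L)" by (rule image_eqI)
  qed
  have inc: "S \<subseteq> comb S ` (S \<rightarrow>\<^sub>E L)"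
  proof
    fix s0 assume s0: "s0 \<in> S"
    have "comb S (\<lambda>s. if s = s0 then 1 else 0) = s0"
      unfolding comb_def
    proof (rule ext)
      fix i
      have "(\<Sum>s\<in>S. (if s = s0 then 1 else 0) * s i) = (\<Sum>s\<in>S. if s0 = s then s0 i else 0)"
        by (rule sum.cong) auto
      also have "\<dots> = s0 i" using s0 fin by (simp add: sum.delta')
      finally show "(\<Sum>s\<in>S. (if s = s0 then 1 else 0) * s i) = s0 i" .
    qed
    then have "s0 = comb S (restrict (\<lambda>s. if s = s0 then 1 else 0) S)"
      by (simp add: comb_restrict)
    moreover have "restrict (\<lambda>s. if s = s0 then 1 else 0) S \<in> S \<rightarrow>\<^sub>E L" using sf0[OF L] sf1[OF L] by auto
    ultimately show "s0 \<in> comb S ` (S \<rightarrow>\<^sub>E L)" by (rule image_eqI)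
  qed
  show "lin_span L S \<subseteq> comb S ` (S \<rightarrow>\<^sub>E L)" by (rule span_least[OF sub inc])
  show "comb S ` (S \<rightarrow>\<^sub>E L) \<subseteq> lin_span L S"
  proof (rule image_subsetI)
    fix c assume "c \<in> S \<rightarrow>\<^sub>E L"
    then have "\<forall>s\<in>S. c s \<in> L" by (auto simp: PiE_iff)
    then show "comb S c \<in> lin_span L S" by (rule comb_in[OF span_sub fin span_inc])
  qed
qed

definition indep :: "'f::field set \<Rightarrow> ('n \<Rightarrow> 'f) set \<Rightarrow> bool" where
  "indep L S \<longleftrightarrow> (\<forall>c\<in>S \<rightarrow>\<^sub>E L. comb S c = vzero \<longrightarrow> (\<forall>s\<in>S. c s = 0))"

lemma indep_inj: assumes L: "is_subfield L" and I: "indep L S"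
  shows "inj_on (comb S) (S \<rightarrow>\<^sub>E L)"
proof (rule inj_onI)
  fix c d assume c: "c \<in> S \<rightarrow>\<^sub>E L" and d: "d \<in> S \<rightarrow>\<^sub>E L" and eq: "comb S c = comb S d"
  have e: "restrict (\<lambda>s. c s - d s) S \<in> S \<rightarrow>\<^sub>E L" using c d sfdiff[OF L] by auto
  have "comb S (restrict (\<lambda>s. c s - d s) S) = vzero"
    using eq unfolding comb_restrict comb_def vzero_def
    by (auto simp: fun_eq_iff left_diff_distrib sum_subtractf)
  with I e have "\<forall>s\<in>S. c s - d s = 0" unfolding indep_def by fastforce
  then show "c = d" using c d by (intro PiE_ext) auto
qed

lemma card_span_indep:
  fixes S :: "('n::finite \<Rightarrow> 'f::{field,finite}) set"
  assumes L: "is_subfield L" and fin: "finite S" and I: "indep L S"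
  shows "card (lin_span L S) = card L ^ card S"
proof -
  have "card (lin_span L S) = card (S \<rightarrow>\<^sub>E L)"
    unfolding span_eq[OF L fin] by (rule card_image[OF indep_inj[OF L I]])
  also have "\<dots> = card L ^ card S" using fin by (simp add: card_PiE)
  finally show ?thesis .
qed

lemma exists_basis:
  fixes U :: "('n::finite \<Rightarrow> 'f::{field,finite}) set"
  assumes "lin_subspace L U"
  shows "\<exists>S. finite S \<and> card S = lin_dim L U \<and> lin_span L S = U"
proof -
  have "\<exists>m S. finite S \<and> card S = m \<and> lin_span L S = U"
    using span_of_sub[OF assms] by (intro exI[of _ "card U"] exI[of _ U]) auto
  then have "\<exists>S. finite S \<and> card S = (LEAST m. \<exists>S. finite S \<and> card S = m \<and> lin_span L S = U) \<and> lin_span L S = U"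
    by (rule LeastI_ex)
  then show ?thesis unfolding lin_dim_def .
qed

lemma min_basis_indep:
  fixes S :: "('n::finite \<Rightarrow> 'f::{field,finite}) set"
  assumes L: "is_subfield L" and fin: "finite S" and sp: "lin_span L S = U"
    and cd: "card S = lin_dim L U"
  shows "indep L S"
  unfolding indep_def
proof (rule ballI, rule impI, rule ccontr)
  fix c assume c: "c \<in> S \<rightarrow>\<^sub>E L" and z: "comb S c = vzero" and "\<not> (\<forall>s\<in>S. c s = 0)"
  then obtain s0 where s0: "s0 \<in> S" "c s0 \<noteq> 0" by auto
  have split: "comb S c = vadd (smul (c s0) s0) (comb (S - {s0}) c)"
  proof -
    have "insert s0 (S - {s0}) = S" using s0(1) by blast
    then show ?thesis using fin comb_insert[of "S - {s0}" s0 c] by simp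
  qed
  define w where "w = comb (S - {s0}) c"
  have w: "w \<in> lin_span L (S - {s0})"
    unfolding w_def using c by (intro comb_in[OF span_sub]) (auto simp: fin span_inc)
  have s0eq: "s0 = smul (- inverse (c s0)) w"
  proof -
    have "vadd (smul (c s0) s0) w = vzero" using z split w_def by simp
    then have "\<forall>i. c s0 * s0 i + w i = 0" by (simp add: vadd_def smul_def vzero_def fun_eq_iff)
    then have h: "\<And>x. c s0 * s0 x = - w x" by (simp add: eq_neg_iff_add_eq_0 add.commute)
    show ?thesis unfolding smul_def
    proof (rule ext)
      fix x
      have "s0 x = inverse (c s0) * (c s0 * s0 x)" using s0(2) by simp
      also have "\<dots> = - inverse (c s0) * w x" by (simp add: h)
      finally show "s0 x = - inverse (c s0) * w x" .
    qed
  qed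
  have "- inverse (c s0) \<in> L" using c s0 sfneg[OF L] sfinv[OF L] by auto
  then have "smul (- inverse (c s0)) w \<in> lin_span L (S - {s0})" using w by (rule sub_smul[OF span_sub])
  then have s0in: "s0 \<in> lin_span L (S - {s0})" by (simp only: s0eq[symmetric])
  have "S \<subseteq> lin_span L (S - {s0})" using s0in span_inc[of "S - {s0}" L] by blast
  then have A: "U \<subseteq> lin_span L (S - {s0})" unfolding sp[symmetric] by (rule span_least[OF span_sub])
  have "S - {s0} \<subseteq> lin_span L S" using span_inc[of S L] by blast
  then have "lin_span L (S - {s0}) \<subseteq> lin_span L S" by (rule span_least[OF span_sub])
  then have B: "lin_span L (S - {s0}) \<subseteq> U" using sp by simp
  from A B have "lin_span L (S - {s0}) = U" by blast
  then have P: "\<exists>S'. finite S' \<and> card S' = card S - 1 \<and> lin_span L S' = U"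
    using fin s0 by (intro exI[of _ "S - {s0}"]) auto
  have "0 < card S" using fin s0(1) by (auto simp: card_gt_0_iff)
  then have "card S - 1 < lin_dim L U" using cd by simp
  then show False
    using P not_less_Least[of "card S - 1" "\<lambda>m. \<exists>S. finite S \<and> card S = m \<and> lin_span L S = U"]
    unfolding lin_dim_def by blast
qed

lemma card_subspace:
  fixes U :: "('n::finite \<Rightarrow> 'f::{field,finite}) set"
  assumes L: "is_subfield L" and U: "lin_subspace L U"
  shows "card U = card L ^ lin_dim L U"
proof -
  obtain S where S: "finite S" "card S = lin_dim L U" "lin_span L S = U" using exists_basis[OF U] by blast
  have "indep L S" using min_basis_indep[OF L S(1) S(3) S(2)] .
  then show ?thesis using card_span_indep[OF L S(1)] S by simp
qed

lemma indep_subset: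
  assumes L: "is_subfield L" and fin: "finite S" and I: "indep L S" and T: "T \<subseteq> S"
  shows "indep L T"
  unfolding indep_def
proof (intro ballI impI)
  fix c s assume c: "c \<in> T \<rightarrow>\<^sub>E L" and z: "comb T c = vzero" and s: "s \<in> T"
  define c' where "c' = restrict (\<lambda>s. if s \<in> T then c s else 0) S"
  have c': "c' \<in> S \<rightarrow>\<^sub>E L" using c sf0[OF L] unfolding c'_def by auto
  have "comb S c' = comb T c"
  proof -
    have "comb S c' = comb S (\<lambda>s. if s \<in> T then c s else 0)" unfolding c'_def comb_restrict ..
    also have "\<dots> = (\<lambda>i. \<Sum>s\<in>S. if s \<in> T then c s * s i else 0)"
      unfolding comb_def by (auto intro!: sum.cong)
    also have "\<dots> = (\<lambda>i. \<Sum>s\<in>S \<inter> T. c s * s i)" using fin by (simp add: sum.inter_restrict)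
    also have "\<dots> = comb T c" using T unfolding comb_def by (simp add: Int_absorb1)
    finally show ?thesis .
  qed
  then have "comb S c' = vzero" using z by simp
  then have "\<forall>s\<in>S. c' s = 0" using I c' unfolding indep_def by blast
  then have "c' s = 0" using s T by blast
  then show "c s = 0" using s T unfolding c'_def by auto
qed


lemma comb_single: "comb {v} c = smul (c v) v"
  unfolding comb_def smul_def by simp

lemma in_span_single:
  fixes v :: "'n::finite \<Rightarrow> 'f::{field,finite}"
  shows "w \<in> lin_span UNIV {v} \<Longrightarrow> \<exists>a. w = smul a v"
  using span_eq[OF subfield_UNIV, of "{v}"] by (auto simp: comb_single)

lemma spanF_B:
  fixes U :: "('n::finite \<Rightarrow> 'f::{field,finite}) set"
  shows "lin_span UNIV (\<Union>(B_set U)) = lin_span UNIV U"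
proof
  show "lin_span UNIV (\<Union>(B_set U)) \<subseteq> lin_span UNIV U"
  proof (rule span_least[OF span_sub], rule Union_least)
    fix d assume "d \<in> B_set U"
    then obtain v w where d: "d = lin_span UNIV {v}" and wd: "w \<in> d" "w \<in> U" "w \<noteq> vzero"
      unfolding B_set_def desarg_spread_def by blast
    obtain a where a: "w = smul a v" using in_span_single wd(1) d by blast
    have "a \<noteq> 0" using wd(3) a by (auto simp: smul_def vzero_def fun_eq_iff)
    then have veq: "v = smul (inverse a) w" using a by (auto simp: smul_def fun_eq_iff)
    have "w \<in> lin_span UNIV U" using wd(2) span_inc[of U UNIV] by blast
    then have "smul (inverse a) w \<in> lin_span UNIV U" by (intro sub_smul[OF span_sub]) auto
    then have "v \<in> lin_span UNIV U" by (simp only: veq[symmetric])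
    then show "d \<subseteq> lin_span UNIV U" unfolding d by (intro span_least[OF span_sub]) auto
  qed
  show "lin_span UNIV U \<subseteq> lin_span UNIV (\<Union>(B_set U))"
  proof (rule span_least[OF span_sub], rule subsetI)
    fix u assume u: "u \<in> U"
    show "u \<in> lin_span UNIV (\<Union>(B_set U))"
    proof (cases "u = vzero")
      case True then show ?thesis using sub_vzero[OF span_sub] by simp
    next
      case False
      have uu: "u \<in> lin_span UNIV {u}" using span_inc[of "{u}" UNIV] by blast
      have "lin_span UNIV {u} \<in> B_set U"
        unfolding B_set_def desarg_spread_def using False u uu by blast
      then have "u \<in> \<Union>(B_set U)" using uu by blast
      then show ?thesis using span_inc[of "\<Union>(B_set U)" UNIV] by blast
    qed
  qed
qed

lemma Kspan_Fclosed:
  fixes S :: "('n \<Rightarrow> 'f::field) set"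
  assumes K: "is_subfield K" and S: "\<And>c u. u \<in> S \<Longrightarrow> smul c u \<in> S"
  shows "lin_subspace UNIV (lin_span K S)"
proof -
  let ?X = "lin_span K S"
  have X: "lin_subspace K ?X" by (rule span_sub)
  define U' where "U' = {v. \<forall>c. smul c v \<in> ?X}"
  have "lin_subspace K U'"
    unfolding lin_subspace_def
  proof (intro conjI ballI)
    have "\<And>c. smul c vzero = (vzero :: 'n \<Rightarrow> 'f)" by (simp add: smul_def vzero_def)
    then show "vzero \<in> U'" unfolding U'_def using sub_vzero[OF X] by simp
  next
    fix u w assume "u \<in> U'" "w \<in> U'"
    then have "\<And>c. vadd (smul c u) (smul c w) \<in> ?X" unfolding U'_def using sub_vadd[OF X] by blast
    moreover have "\<And>c. smul c (vadd u w) = vadd (smul c u) (smul c w)"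
      by (simp add: smul_def vadd_def fun_eq_iff distrib_left)
    ultimately show "vadd u w \<in> U'" unfolding U'_def by simp
  next
    fix a u assume a: "a \<in> K" and "u \<in> U'"
    then have "\<And>c. smul a (smul c u) \<in> ?X" unfolding U'_def using sub_smul[OF X] by blast
    moreover have "\<And>c. smul c (smul a u) = smul a (smul c u)"
      by (simp add: smul_def fun_eq_iff mult.left_commute)
    ultimately show "smul a u \<in> U'" unfolding U'_def by simp
  qed
  moreover have "S \<subseteq> U'" unfolding U'_def using S span_inc[of S K] by blast
  ultimately have sub: "?X \<subseteq> U'" by (rule span_least)
  show ?thesis unfolding lin_subspace_def
  proof (intro conjI ballI)
    show "vzero \<in> ?X" by (rule sub_vzero[OF X])
  next
    fix u w assume "u \<in> ?X" "w \<in> ?X" then show "vadd u w \<in> ?X" by (rule sub_vadd[OF X])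
  next
    fix c u assume "u \<in> ?X" then show "smul c u \<in> ?X" using sub unfolding U'_def by blast
  qed
qed

lemma psub_card:
  fixes U :: "('n::finite \<Rightarrow> 'f::{field,finite}) set"
  assumes "is_subfield K" "psub K d U"
  shows "card U = card K ^ d"
proof -
  have "lin_subspace K U" "lin_dim K U = d" using assms(2) unfolding psub_def by auto
  then show ?thesis using card_subspace[OF assms(1), of U] by simp
qed

theorem proposition4p11:
  fixes K :: "'f::{field,finite} set"
    and n k t q :: nat
    and nu Pi Omega Gamma :: "('n::finite \<Rightarrow> 'f) set"
    and Bbar :: "('n \<Rightarrow> 'f) set set"
  assumes "n = card (UNIV :: 'n set)"
    and "0 < k" and "k < n" and "4 \<le> t"
    and "\<exists>p r. prime p \<and> 0 < r \<and> q = p ^ r"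
    and "is_subfield K" and "card K = q" and "card (UNIV :: 'f set) = q ^ t"
    and "D_subspace K t (n - k) nu"
    and "psub K (n*t - k*t + 2) Pi" and "nu \<subseteq> Pi"
    and "span_dim_qt (B_set Pi) = n - k + 2"
    and "psub K (n*t - k*t - 1) Omega" and "Omega \<subseteq> Pi"
    and "psub K (n*t - k*t - 3) (Omega \<inter> nu)"
    and "psub K 3 Gamma" and "Gamma \<subseteq> Pi" and "Gamma \<inter> Omega = {vzero}"
    and "minimal_blocking_set K Gamma Bbar"
    and "\<forall>P\<in>Bbar. P \<inter> nu = {vzero}"
  shows "span_dim_qt (B_set (cone K Omega Bbar)) = n - k + 2"
proof -
  note A = assms
  have Ksf: "is_subfield K" by fact
  obtain p r where pr: "prime p" "0 < r" "q = p ^ r" using A(5) by blast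
  have p1: "1 < p" using prime_gt_1_nat[OF pr(1)] .
  have q1: "1 < q" using one_less_power[OF p1 pr(2)] pr(3) by simp
  define M where "M = n*t - k*t"
  have M: "(n - k) * t = M" by (simp add: M_def diff_mult_distrib)
  have "1 \<le> n - k" using A(3) by simp
  then have "t \<le> (n - k) * t" by simp
  then have M4: "4 \<le> M" using M A(4) by simp
  have cK: "card K = q" by fact
  have cPi: "card Pi = q ^ (M + 2)" using psub_card[OF Ksf A(10)] cK M_def by simp
  have cOm: "card Omega = q ^ (M - 1)" using psub_card[OF Ksf A(13)] cK M_def by simp
  have cI: "card (Omega \<inter> nu) = q ^ (M - 3)" using psub_card[OF Ksf A(15)] cK M_def by simp
  have nuD: "psub K ((n - k) * t) nu" using A(9) unfolding D_subspace_def by blast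
  have cnu: "card nu = q ^ M" using psub_card[OF Ksf nuD] cK M by simp
  have sPi: "lin_subspace K Pi" using A(10) unfolding psub_def by blast
  have sOm: "lin_subspace K Omega" using A(13) unfolding psub_def by blast
  have snu: "lin_subspace K nu" using nuD unfolding psub_def by blast
  have sGa: "lin_subspace K Gamma" using A(16) unfolding psub_def by blast
  have m1: "- 1 \<in> K" using sfneg[OF Ksf sf1[OF Ksf]] .

  have bl: "blocks_lines K Gamma Bbar" using A(19) unfolding minimal_blocking_set_def by blast
  have Bne: "Bbar \<noteq> {}"
  proof -
    obtain S where S: "finite S" "card S = lin_dim K Gamma" "lin_span K S = Gamma"
      using exists_basis[OF sGa] by blast
    have c3: "card S = 3" using S(2) A(16) unfolding psub_def by simp
    have IS: "indep K S" by (rule min_basis_indep[OF Ksf S(1) S(3) S(2)])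
    obtain s1 where s1: "s1 \<in> S" using c3 by (metis card.empty ex_in_conv zero_neq_numeral)
    have "card (S - {s1}) = 2" using c3 s1 S(1) by simp
    then obtain s2 where s2: "s2 \<in> S - {s1}" by (metis card.empty ex_in_conv zero_neq_numeral)
    define T where "T = {s1, s2}"
    have TS: "T \<subseteq> S" using s1 s2 T_def by blast
    have cT: "card T = 2" using s2 T_def by (auto simp: card_insert_if)
    have IT: "indep K T" by (rule indep_subset[OF Ksf S(1) IS TS])
    have fT: "finite T" using T_def by simp
    have "card (lin_span K T) = q ^ 2" using card_span_indep[OF Ksf fT IT] cT cK by simp
    moreover have "card (lin_span K T) = q ^ lin_dim K (lin_span K T)"
      using card_subspace[OF Ksf span_sub, of T] cK by simp
    ultimately have "lin_dim K (lin_span K T) = 2" using q1 by simp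
    then have line: "psub K 2 (lin_span K T)" unfolding psub_def using span_sub by blast
    have "T \<subseteq> Gamma" using TS S(3) span_inc[of S K] by blast
    then have "lin_span K T \<subseteq> Gamma" by (rule span_least[OF sGa])
    then have "\<exists>P\<in>Bbar. P \<subseteq> lin_span K T" using bl line unfolding blocks_lines_def by blast
    then show ?thesis by blast
  qed
  define C where "C = cone K Omega Bbar"
  obtain P0 where P0: "P0 \<in> Bbar" using Bne by blast
  have OmC: "Omega \<subseteq> C"
    unfolding C_def cone_def using P0 span_inc[of "P0 \<union> Omega" K] by blast
  have CPi: "C \<subseteq> Pi"
    unfolding C_def cone_def
  proof (rule UN_least)
    fix P assume "P \<in> Bbar"
    then have "P \<subseteq> Gamma" using bl unfolding blocks_lines_def by blast
    then have "P \<union> Omega \<subseteq> Pi" using A(17) A(14) by blast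
    then show "lin_span K (P \<union> Omega) \<subseteq> Pi" by (rule span_least[OF sPi])
  qed

  define Ss where "Ss = (\<lambda>x. vadd (fst x) (snd x)) ` (Omega \<times> nu)"
  have SsPi: "Ss \<subseteq> Pi" unfolding Ss_def using A(14) A(11) by (auto intro!: sub_vadd[OF sPi])
  define fib where "fib s = {x \<in> Omega \<times> nu. vadd (fst x) (snd x) = s}" for s
  have fibb: "card (fib s) \<le> card (Omega \<inter> nu)" if s: "s \<in> Ss" for s
  proof -
    obtain a0 b0 where ab0: "a0 \<in> Omega" "b0 \<in> nu" "s = vadd a0 b0" using s unfolding Ss_def by auto
    let ?f = "\<lambda>x. vadd (fst x) (smul (-1) a0)"
    have "inj_on ?f (fib s)"
    proof (rule inj_onI)
      fix x y assume x: "x \<in> fib s" and y: "y \<in> fib s" and e: "?f x = ?f y"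
      have "fst x = fst y" using e by (auto simp: vadd_def smul_def fun_eq_iff)
      moreover have "vadd (fst x) (snd x) = vadd (fst y) (snd y)" using x y unfolding fib_def by simp
      ultimately have "snd x = snd y" by (auto simp: vadd_def fun_eq_iff)
      with \<open>fst x = fst y\<close> show "x = y" by (simp add: prod_eq_iff)
    qed
    moreover have "?f ` fib s \<subseteq> Omega \<inter> nu"
    proof
      fix z assume "z \<in> ?f ` fib s"
      then obtain a b where ab: "a \<in> Omega" "b \<in> nu" "vadd a b = s" "z = vadd a (smul (-1) a0)"
        unfolding fib_def by auto
      have "z \<in> Omega" using ab sub_vadd[OF sOm] sub_smul[OF sOm m1] ab0 by simp
      moreover have "z = vadd b0 (smul (-1) b)"
      proof (rule ext)
        fix i
        have h: "a i + b i = a0 i + b0 i" using ab(3) ab0(3) by (auto simp: vadd_def fun_eq_iff)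
        have "z i = a i + (-1) * a0 i" using ab(4) by (simp add: vadd_def smul_def)
        also have "\<dots> = b0 i + (-1) * b i" using h by algebra
        finally show "z i = vadd b0 (smul (-1) b) i" by (simp add: vadd_def smul_def)
      qed
      then have "z \<in> nu" using ab sub_vadd[OF snu] sub_smul[OF snu m1] ab0 by simp
      ultimately show "z \<in> Omega \<inter> nu" by blast
    qed
    ultimately show ?thesis by (rule card_inj_on_le) simp
  qed
  have "Omega \<times> nu = (\<Union>s\<in>Ss. fib s)" unfolding fib_def Ss_def by auto
  then have "card (Omega \<times> nu) \<le> (\<Sum>s\<in>Ss. card (fib s))" using card_UN_le[of Ss fib] by simp
  also have "\<dots> \<le> card Ss * card (Omega \<inter> nu)" using sum_bounded_above[of Ss "\<lambda>s. card (fib s)"] fibb by simp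
  finally have "q ^ (M - 1) * q ^ M \<le> card Ss * q ^ (M - 3)"
    using cOm cnu cI by (simp add: card_cartesian_product)
  moreover have "q ^ (M - 1) * q ^ M = q ^ (M + 2) * q ^ (M - 3)"
  proof -
    have "M - 1 + M = M + 2 + (M - 3)" using M4 by simp
    then show ?thesis by (simp add: power_add[symmetric])
  qed
  ultimately have "q ^ (M + 2) \<le> card Ss" using q1 by simp
  then have SsEq: "Ss = Pi" using SsPi cPi by (intro card_seteq) auto

  have nuF: "lin_subspace UNIV nu"
  proof -
    have "nu = lin_span K (\<Union>{d \<in> desarg_spread. d \<subseteq> nu})" using A(9) unfolding D_subspace_def by blast
    moreover have "lin_subspace UNIV (lin_span K (\<Union>{d \<in> desarg_spread. d \<subseteq> nu}))"
    proof (rule Kspan_Fclosed[OF Ksf])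
      fix c u assume "u \<in> \<Union>{d \<in> desarg_spread. d \<subseteq> nu}"
      then obtain d where d: "d \<in> desarg_spread" "d \<subseteq> nu" "u \<in> d" by blast
      then obtain v where dv: "d = lin_span UNIV {v}" unfolding desarg_spread_def by blast
      have "u \<in> lin_span UNIV {v}" using d(3) dv by simp
      then have "smul c u \<in> lin_span UNIV {v}" by (intro sub_smul[OF span_sub]) auto
      then have "smul c u \<in> d" using dv by simp
      then show "smul c u \<in> \<Union>{d \<in> desarg_spread. d \<subseteq> nu}" using d by blast
    qed
    ultimately show ?thesis by simp
  qed
  define V where "V = lin_span UNIV (Omega \<inter> nu)"
  have sV: "lin_subspace UNIV V" unfolding V_def by (rule span_sub)
  have Vnu: "V \<subseteq> nu" unfolding V_def by (rule span_least[OF nuF]) blast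
  have IV: "Omega \<inter> nu \<subseteq> V" unfolding V_def by (rule span_inc)
  have nuV: "nu \<subseteq> V"
  proof (rule ccontr)
    assume "\<not> nu \<subseteq> V"
    then obtain v where v: "v \<in> nu" "v \<notin> V" by blast
    let ?g = "\<lambda>x. vadd (snd x) (smul (fst x) v)"
    have "inj_on ?g ((UNIV :: 'f set) \<times> V)"
    proof (rule inj_onI)
      fix x y assume x: "x \<in> (UNIV :: 'f set) \<times> V" and y: "y \<in> (UNIV :: 'f set) \<times> V" and e: "?g x = ?g y"
      obtain a w where xa: "x = (a, w)" by (cases x)
      obtain b w' where yb: "y = (b, w')" by (cases y)
      have wV: "w \<in> V" "w' \<in> V" using x y xa yb by auto
      have ei: "\<And>i. w i + a * v i = w' i + b * v i" using e xa yb by (auto simp: vadd_def smul_def fun_eq_iff)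
      show "x = y"
      proof (cases "a = b")
        case True
        then have "w = w'" using ei by (auto simp: fun_eq_iff)
        then show ?thesis using True xa yb by simp
      next
        case False
        have veq: "v = smul (inverse (a - b)) (vadd w' (smul (-1) w))"
          unfolding smul_def vadd_def
        proof (rule ext)
          fix i
          have h: "(a - b) * v i = w' i + (-1) * w i" using ei[of i] by (simp add: algebra_simps)
          have "v i = inverse (a - b) * ((a - b) * v i)" using False by simp
          also have "\<dots> = inverse (a - b) * (w' i + (-1) * w i)" by (simp only: h)
          finally show "v i = inverse (a - b) * (w' i + (-1) * w i)" .
        qed
        have "smul (inverse (a - b)) (vadd w' (smul (-1) w)) \<in> V"
          using wV sub_vadd[OF sV] sub_smul[OF sV] by simp
        then have "v \<in> V" by (simp only: veq[symmetric])
        then show ?thesis using v by blast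
      qed
    qed
    moreover have "?g ` ((UNIV :: 'f set) \<times> V) \<subseteq> nu"
      using Vnu v(1) sub_vadd[OF nuF] sub_smul[OF nuF] by auto
    ultimately have "card ((UNIV :: 'f set) \<times> V) \<le> card nu" by (rule card_inj_on_le) simp
    then have "q ^ t * card V \<le> q ^ M" using A(8) cnu by (simp add: card_cartesian_product)
    moreover have "q ^ (M - 3) \<le> card V" using card_mono[OF _ IV] cI by simp
    ultimately have "q ^ t * q ^ (M - 3) \<le> q ^ M"
      by (meson le_trans mult_le_mono2)
    then have "q ^ (t + (M - 3)) \<le> q ^ M" by (simp add: power_add)
    moreover have "M < t + (M - 3)" using A(4) M4 by simp
    ultimately show False using q1 by (simp add: power_increasing_iff)
  qed

  have "lin_span UNIV C = lin_span UNIV Pi"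
  proof
    show "lin_span UNIV C \<subseteq> lin_span UNIV Pi"
      using CPi span_inc[of Pi UNIV] by (intro span_least[OF span_sub]) blast
    have "Omega \<inter> nu \<subseteq> lin_span UNIV C" using OmC span_inc[of C UNIV] by blast
    then have "V \<subseteq> lin_span UNIV C" unfolding V_def by (rule span_least[OF span_sub])
    then have nuC: "nu \<subseteq> lin_span UNIV C" using nuV by blast
    have OmC': "Omega \<subseteq> lin_span UNIV C" using OmC span_inc[of C UNIV] by blast
    have "Pi \<subseteq> lin_span UNIV C"
    proof
      fix x assume "x \<in> Pi"
      then obtain a b where "a \<in> Omega" "b \<in> nu" "x = vadd a b" using SsEq unfolding Ss_def by auto
      then show "x \<in> lin_span UNIV C" using nuC OmC' sub_vadd[OF span_sub] by blast
    qed
    then show "lin_span UNIV Pi \<subseteq> lin_span UNIV C" by (rule span_least[OF span_sub])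
  qed
  then show ?thesis using A(12) unfolding C_def span_dim_qt_def spanF_B by simp
qed

end
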